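(* A finite graph $G$ satisfies $\theta(G)=2$ if and only if $G$ is isomorphic to $K_2$ or to $\overline{K_2}$ (equivalently, $|V(G)|=2$).
   Context: All graphs are finite and simple. The distinguishing threshold $\theta(G)$ is the minimum $k$ such that every vertex coloring of $G$ using exactly $k$ colors is distinguishing (no non-identity automorphism maps every vertex to a vertex of the same color); equivalently $\theta(G)=1+\max\{c(\alpha):\alpha\in\mathrm{Aut}(G)\}$, where $c(\alpha)$ is the number of cycles of $\alpha$ as a permutation of $V(G)$ (fixed points count as cycles) and $c(\mathrm{id})=0$. *)

theory Defs
  imports Main
begin

definition simple_graph :: "'a set \<Rightarrow> ('a \<Rightarrow> 'a \<Rightarrow> bool) \<Rightarrow> bool" where
  "simple_graph V E \<longleftrightarrow> finite V \<and> (\<forall>x y. E x y \<longrightarrow> x \<in> V \<and> y \<in> V)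
     \<and> (\<forall>x y. E x y \<longrightarrow> E y x) \<and> (\<forall>x. \<not> E x x)"

definition is_aut :: "'a set \<Rightarrow> ('a \<Rightarrow> 'a \<Rightarrow> bool) \<Rightarrow> ('a \<Rightarrow> 'a) \<Rightarrow> bool" where
  "is_aut V E \<alpha> \<longleftrightarrow> bij_betw \<alpha> V V \<and> (\<forall>x\<in>V. \<forall>y\<in>V. E (\<alpha> x) (\<alpha> y) \<longleftrightarrow> E x y)"

definition distinguishing :: "'a set \<Rightarrow> ('a \<Rightarrow> 'a \<Rightarrow> bool) \<Rightarrow> ('a \<Rightarrow> nat) \<Rightarrow> bool" where
  "distinguishing V E f \<longleftrightarrow>
     \<not> (\<exists>\<alpha>. is_aut V E \<alpha> \<and> (\<exists>v\<in>V. \<alpha> v \<noteq> v) \<and> (\<forall>v\<in>V. f (\<alpha> v) = f v))"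

definition dist_threshold :: "'a set \<Rightarrow> ('a \<Rightarrow> 'a \<Rightarrow> bool) \<Rightarrow> nat" where
  "dist_threshold V E = (LEAST k. k \<ge> 1 \<and>
     (\<forall>f :: 'a \<Rightarrow> nat. card (f ` V) = k \<longrightarrow> distinguishing V E f))"

end

theory Submission
  imports Defs
begin

lemma inj_col_dist:
  assumes "finite V" "card (f ` V) = card V"
  shows "distinguishing V E f"
proof -
  have inj: "inj_on f V" using assms by (simp add: inj_on_iff_eq_card)
  show ?thesis unfolding distinguishing_def is_aut_def
  proof clarify
    fix \<alpha> v assume b: "bij_betw \<alpha> V V" and v: "v \<in> V" "\<alpha> v \<noteq> v"
      and h: "\<forall>v\<in>V. f (\<alpha> v) = f v"
    have "\<alpha> v \<in> V" using b v bij_betwE by blast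
    then show False using inj h v unfolding inj_on_def by blast
  qed
qed

lemma thr2:
  fixes E :: "'a \<Rightarrow> 'a \<Rightarrow> bool" and V :: "'a set"
  assumes fin: "finite V"
  defines "P \<equiv> \<lambda>k. k \<ge> 1 \<and> (\<forall>f :: 'a \<Rightarrow> nat. card (f ` V) = k \<longrightarrow> distinguishing V E f)"
  shows "dist_threshold V E = 2 \<longleftrightarrow> \<not> P 1 \<and> P 2"
proof -
  have dt: "dist_threshold V E = (LEAST k. P k)" unfolding dist_threshold_def P_def by simp
  have ex: "P (card V + 1)" unfolding P_def
    proof (intro conjI allI impI)
    fix f :: "'a \<Rightarrow> nat" assume "card (f ` V) = card V + 1"
    thus "distinguishing V E f" using card_image_le[OF fin, of f] by simp
  qed simp
  show ?thesis
  proof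
    assume "dist_threshold V E = 2"
    hence L: "(LEAST k. P k) = 2" using dt by simp
    have "P 2" using LeastI[of P, OF ex] L by simp
    moreover have "\<not> P 1" using not_less_Least[of 1 P] L by simp
    ultimately show "\<not> P 1 \<and> P 2" by simp
  next
    assume h: "\<not> P 1 \<and> P 2"
    have "(LEAST k. P k) = 2"
    proof (rule Least_equality)
      show "P 2" using h by simp
      fix y assume "P y"
      hence "y \<ge> 1" unfolding P_def by simp
      moreover have "y \<noteq> 1" using h \<open>P y\<close> by auto
      ultimately show "2 \<le> y" by simp
    qed
    thus "dist_threshold V E = 2" using dt by simp
  qed
qed

lemma key:
  assumes sg: "simple_graph V E" and aut: "is_aut V E \<alpha>" and v0: "v0 \<in> V" "\<alpha> v0 \<noteq> v0"
    and c3: "card V \<ge> 3"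
  shows "\<exists>f :: 'a \<Rightarrow> nat. card (f ` V) = 2 \<and> \<not> distinguishing V E f"
proof -
  have fin: "finite V" using sg unfolding simple_graph_def by simp
  have symE: "\<And>x y. E x y \<Longrightarrow> E y x" using sg unfolding simple_graph_def by blast
  have bij: "bij_betw \<alpha> V V" and pres: "\<And>x y. x \<in> V \<Longrightarrow> y \<in> V \<Longrightarrow> E (\<alpha> x) (\<alpha> y) \<longleftrightarrow> E x y"
    using aut unfolding is_aut_def by auto
  have aV: "\<And>x. x \<in> V \<Longrightarrow> \<alpha> x \<in> V" using bij bij_betwE by blast
  have ainj: "\<And>x y. x \<in> V \<Longrightarrow> y \<in> V \<Longrightarrow> \<alpha> x = \<alpha> y \<Longrightarrow> x = y"
    using bij unfolding bij_betw_def inj_on_def by blast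
  define g where "g i = (\<alpha> ^^ i) v0" for i
  have gV: "g i \<in> V" for i unfolding g_def by (induction i) (auto simp: v0 aV)
  have gS: "g (Suc i) = \<alpha> (g i)" for i unfolding g_def by simp
  have gshift: "g a = g b \<Longrightarrow> g (a + k) = g (b + k)" for a b k
    by (induction k) (auto simp: gS)
  have gEshift: "E (g a) (g b) \<longleftrightarrow> E (g (a + k)) (g (b + k))" for a b k
  proof (induction k)
    case (Suc k) thus ?case using pres[OF gV gV] by (simp add: gS)
  qed simp
  have gdown: "g (a + k) = g (b + k) \<Longrightarrow> g a = g b" for a b k
  proof (induction k)
    case (Suc k) thus ?case using ainj[OF gV gV] by (simp add: gS)
  qed simp
  have "\<not> inj g"
  proof
    assume "inj g"
    hence "infinite (range g)" using finite_imageD by blast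
    moreover have "range g \<subseteq> V" using gV by auto
    ultimately show False using fin finite_subset by blast
  qed
  then obtain a b where ab: "g a = g b" "a < b" unfolding inj_def by (metis linorder_neqE_nat)
  have "g 0 = g (b - a)" using gdown[of 0 a "b - a"] ab by simp
  hence ex: "\<exists>m. m > 0 \<and> g m = v0" using ab by (auto simp: g_def intro!: exI[of _ "b-a"])
  define m where "m = (LEAST m. m > 0 \<and> g m = v0)"
  have m: "m > 0" "g m = v0" using LeastI_ex[OF ex] unfolding m_def by auto
  have mmin: "\<And>k. 0 < k \<Longrightarrow> k < m \<Longrightarrow> g k \<noteq> v0" using not_less_Least unfolding m_def by blast
  have g0: "g 0 = v0" by (simp add: g_def)
  have gper: "g (m + t) = g t" for t using gshift[of m 0 t] m g0 by simp
  have gmod: "g (i mod m) = g i" for i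
  proof -
    have "g (m * q + r) = g r" for q r
      proof (induction q)
        case (Suc q)
        have "g (m * Suc q + r) = g (m + (m * q + r))" by (simp add: algebra_simps)
        also have "\<dots> = g (m * q + r)" by (rule gper)
        finally show ?case using Suc by simp
      qed simp
    thus ?thesis by (metis div_mult_mod_eq mult.commute)
  qed
  have g1: "g 1 \<noteq> v0" using v0 g0 gS[of 0] by simp
  hence m2: "m \<ge> 2" using m by (metis One_nat_def Suc_1 Suc_leI le_neq_implies_less)
  define Orb where "Orb = range g"
  show ?thesis
  proof (cases "Orb = V")
    case False
    then obtain w where w: "w \<in> V" "w \<notin> Orb" unfolding Orb_def using gV by blast
    define f where "f x = (if x \<in> Orb then 0 else 1::nat)" for x
    have "f ` V = {0, 1}"
    proof
      show "f ` V \<subseteq> {0,1}" unfolding f_def by auto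
      have "f v0 = 0" "f w = 1" using w g0 unfolding f_def Orb_def by auto
      thus "{0,1} \<subseteq> f ` V" using v0 w by (metis empty_subsetI image_eqI insert_subset)
    qed
    hence c: "card (f ` V) = 2" by simp
    have "\<forall>x\<in>V. f (\<alpha> x) = f x"
    proof
      fix x assume x: "x \<in> V"
      have "\<alpha> x \<in> Orb \<longleftrightarrow> x \<in> Orb"
      proof
        assume "\<alpha> x \<in> Orb"
        then obtain i where i: "\<alpha> x = g i" unfolding Orb_def by auto
        have "\<alpha> (g (i + m - 1)) = g i" using gS[of "i+m-1"] m gper[of i]
          by (simp add: add.commute)
        hence "x = g (i + m - 1)" using ainj[OF x gV] i by simp
        thus "x \<in> Orb" unfolding Orb_def by simp
      next
        assume "x \<in> Orb"
        then obtain i where "x = g i" unfolding Orb_def by auto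
        thus "\<alpha> x \<in> Orb" unfolding Orb_def using gS by (metis rangeI)
      qed
      thus "f (\<alpha> x) = f x" unfolding f_def by simp
    qed
    hence "\<not> distinguishing V E f" unfolding distinguishing_def using aut v0 by blast
    thus ?thesis using c by blast
  next
    case True
    have Vg: "V = g ` {..<m}"
    proof
      show "g ` {..<m} \<subseteq> V" using gV by auto
      show "V \<subseteq> g ` {..<m}"
      proof
        fix x assume "x \<in> V"
        then obtain i where "x = g i" using True unfolding Orb_def by auto
        hence "x = g (i mod m)" using gmod by simp
        moreover have "i mod m < m" using m by simp
        ultimately show "x \<in> g ` {..<m}" by blast
      qed
    qed
    have "card V \<le> m" using Vg card_image_le[of "{..<m}" g] by simp
    hence m3: "m \<ge> 3" using c3 by simp
    define idx where "idx x = (LEAST i. i < m \<and> g i = x)" for x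
    have idx: "x \<in> V \<Longrightarrow> idx x < m \<and> g (idx x) = x" for x
    proof -
      assume "x \<in> V"
      then obtain i where "i < m" "g i = x" using Vg by auto
      thus ?thesis unfolding idx_def by (intro LeastI[of "\<lambda>i. i < m \<and> g i = x" i]) simp
    qed
    define \<beta> where "\<beta> x = g (m - idx x)" for x
    have bV: "\<beta> x \<in> V" for x unfolding \<beta>_def using gV by simp
    have binv: "x \<in> V \<Longrightarrow> \<beta> (\<beta> x) = x" for x
    proof -
      assume x: "x \<in> V"
      define i where "i = idx x"
      define j where "j = idx (\<beta> x)"
      have i: "i < m" "g i = x" using idx[OF x] i_def by auto
      have j: "j < m" "g j = g (m - i)" using idx[OF bV[of x]] j_def \<beta>_def i_def by auto
      have "g (j + ((m - j) + i)) = g (m - i + ((m - j) + i))" using gshift[OF j(2)] .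
      moreover have "j + ((m - j) + i) = m + i" using j by simp
      moreover have "m - i + ((m - j) + i) = m + (m - j)" using i j by simp
      ultimately have "g i = g (m - j)" using gper by metis
      thus ?thesis using i unfolding \<beta>_def j_def by simp
    qed
    have bbij: "bij_betw \<beta> V V"
      by (rule bij_betw_byWitness[where f'=\<beta>]) (auto simp: binv bV)
    have bE: "E (\<beta> x) (\<beta> y) \<longleftrightarrow> E x y" if x: "x \<in> V" and y: "y \<in> V" for x y
    proof -
      define i where "i = idx x"
      define j where "j = idx y"
      have i: "i < m" "g i = x" using idx[OF x] i_def by auto
      have j: "j < m" "g j = y" using idx[OF y] j_def by auto
      have "E (\<beta> x) (\<beta> y) \<longleftrightarrow> E (g (m - i)) (g (m - j))" unfolding \<beta>_def i_def j_def by simp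
      also have "\<dots> \<longleftrightarrow> E (g (m - i + (i + j))) (g (m - j + (i + j)))" by (rule gEshift)
      also have "m - i + (i + j) = m + j" using i by simp
      also have "m - j + (i + j) = m + i" using j by simp
      also have "E (g (m + j)) (g (m + i)) \<longleftrightarrow> E y x" using gper i j by simp
      also have "\<dots> \<longleftrightarrow> E x y" using symE by blast
      finally show ?thesis .
    qed
    have baut: "is_aut V E \<beta>" unfolding is_aut_def using bbij bE by blast
    have idx1: "idx (g 1) = 1"
    proof -
      have "idx (g 1) < m \<and> g (idx (g 1)) = g 1" using idx[OF gV] .
      moreover have "idx (g 1) \<le> 1" unfolding idx_def using m2
        by (intro Least_le) simp
      ultimately show ?thesis using g1 g0 by (metis le_neq_implies_less less_one)
    qed
    have b1: "\<beta> (g 1) \<noteq> g 1"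
    proof
      assume "\<beta> (g 1) = g 1"
      hence "g (m - 1) = g 1" unfolding \<beta>_def idx1 .
      hence "g (m - 1 + 1) = g (1 + 1)" by (rule gshift)
      hence "g 2 = v0" using m m2 by (simp add: numeral_2_eq_2)
      thus False using mmin[of 2] m3 by simp
    qed
    have idx0: "idx v0 = 0" unfolding idx_def using m g0 by (intro Least_equality) auto
    have bv0: "\<beta> v0 = v0" unfolding \<beta>_def idx0 using m by simp
    define f where "f x = (if x = v0 then 0 else 1::nat)" for x
    have "f ` V = {0, 1}"
    proof
      show "f ` V \<subseteq> {0,1}" unfolding f_def by auto
      have "f v0 = 0" "f (g 1) = 1" using g1 unfolding f_def by auto
      thus "{0,1} \<subseteq> f ` V" using v0 gV by (metis empty_subsetI image_eqI insert_subset)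
    qed
    hence c: "card (f ` V) = 2" by simp
    have "\<forall>x\<in>V. f (\<beta> x) = f x"
    proof
      fix x assume x: "x \<in> V"
      have "\<beta> x = v0 \<longleftrightarrow> x = v0" using binv[OF x] bv0 by metis
      thus "f (\<beta> x) = f x" unfolding f_def by simp
    qed
    hence "\<not> distinguishing V E f" unfolding distinguishing_def using baut b1 gV by blast
    thus ?thesis using c by blast
  qed
qed

theorem mainTheorem4:
  fixes V :: "'a set" and E :: "'a \<Rightarrow> 'a \<Rightarrow> bool"
  assumes "simple_graph V E"
  shows "dist_threshold V E = 2 \<longleftrightarrow>
    ((\<exists>a b. a \<noteq> b \<and> V = {a, b} \<and> E a b) \<or> (\<exists>a b. a \<noteq> b \<and> V = {a, b} \<and> \<not> E a b))"
proof -
  have fin: "finite V" using assms unfolding simple_graph_def by simp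
  define P where "P \<equiv> \<lambda>k. k \<ge> 1 \<and> (\<forall>f :: 'a \<Rightarrow> nat. card (f ` V) = k \<longrightarrow> distinguishing V E f)"
  have T: "dist_threshold V E = 2 \<longleftrightarrow> \<not> P 1 \<and> P 2" unfolding P_def by (rule thr2[OF fin])
  have "(\<not> P 1 \<and> P 2) \<longleftrightarrow> card V = 2"
  proof
    assume h: "\<not> P 1 \<and> P 2"
    then obtain f where "card (f ` V) = 1" "\<not> distinguishing V E f" unfolding P_def by auto
    then obtain \<alpha> v where a: "is_aut V E \<alpha>" "v \<in> V" "\<alpha> v \<noteq> v"
      unfolding distinguishing_def by blast
    have "\<alpha> v \<in> V" using a unfolding is_aut_def using bij_betwE by blast
    hence "{v, \<alpha> v} \<subseteq> V" using a by simp
    hence "card {v, \<alpha> v} \<le> card V" using fin card_mono by blast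
    hence c2: "card V \<ge> 2" using a by simp
    show "card V = 2"
    proof (rule ccontr)
      assume "card V \<noteq> 2"
      hence "card V \<ge> 3" using c2 by simp
      then obtain f where "card (f ` V) = 2" "\<not> distinguishing V E f"
        using key[OF assms a] by blast
      thus False using h unfolding P_def by auto
    qed
  next
    assume c: "card V = 2"
    then obtain a b where ab: "a \<noteq> b" "V = {a, b}" by (meson card_2_iff)
    have "P 2" unfolding P_def using inj_col_dist[OF fin] c by auto
    moreover have "\<not> P 1"
    proof
      assume "P 1"
      have "card ((\<lambda>_. 0::nat) ` V) = 1" using ab by simp
      hence d: "distinguishing V E (\<lambda>_. 0)" using \<open>P 1\<close> unfolding P_def by blast
      define \<alpha> where "\<alpha> x = (if x = a then b else a)" for x
      have "bij_betw \<alpha> V V" unfolding \<alpha>_def using ab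
        by (intro bij_betw_byWitness[where f'=\<alpha>]) (auto simp: \<alpha>_def)
      moreover have "\<forall>x\<in>V. \<forall>y\<in>V. E (\<alpha> x) (\<alpha> y) \<longleftrightarrow> E x y"
        using ab assms unfolding simple_graph_def \<alpha>_def by auto
      ultimately have "is_aut V E \<alpha>" unfolding is_aut_def by blast
      moreover have "\<alpha> a \<noteq> a" "a \<in> V" using ab \<alpha>_def by auto
      ultimately show False using d unfolding distinguishing_def by blast
    qed
    ultimately show "\<not> P 1 \<and> P 2" by simp
  qed
  moreover have "card V = 2 \<longleftrightarrow> ((\<exists>a b. a \<noteq> b \<and> V = {a, b} \<and> E a b) \<or> (\<exists>a b. a \<noteq> b \<and> V = {a, b} \<and> \<not> E a b))"
    by (auto simp: card_2_iff)
  ultimately show ?thesis using T by simp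
qed

end
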